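(* Suppose $(A,W)$ is a Pratt comonoid such that $W$ has cardinality less than the continuum. Say that an element $a\in A$ dominates an equivalence class $E$ of strongly indecomposable elements of $W$ if every member of $W$ containing $a$ contains some member of $E$. Then every $a\in A$ dominates at least one equivalence class of strongly indecomposable elements of $W$. Moreover, if $(A,W)$ is $T_1$ and $a$ dominates an equivalence class $E$, then either $\bigcap_{w\in E}w=\emptyset$ or $\bigcap_{w\in E}w=\{a\}$; and in the latter case, $E$ is the set of all strongly indecomposable elements of $W$ containing $a$, $E$ is the only equivalence class dominated by $a$, and $a$ is the only element of $A$ dominating $E$. Consequently, if $(A,W)$ is $T_1$ and $A$ is infinite, there exists at least one equivalence class $E$ of strongly indecomposable elements of $W$ with $\bigcap_{w\in E}w=\emptyset$.
   Context: A Pratt comonoid is a pair $(A,W)$ where $A$ is a set and $W$ is a set of subsets of $A$ such that (i) $\emptyset\in W$ and $A\in W$; (ii) whenever $C\subseteq A\times A$ is such that for every $a\in A$ both the $a$-th row $\{b\mid (a,b)\in C\}$ and the $a$-th column $\{b\mid (b,a)\in C\}$ belong to $W$, the diagonal $\{b\mid (b,b)\in C\}$ also belongs to $W$. $(A,W)$ is $T_1$ if for all distinct $a,b\in A$ some member of $W$ contains $a$ but not $b$. $W$ is regarded as a meet-semilattice under intersection with least element $\emptyset$. Two elements are disjoint if their intersection is $\emptyset$. A nonempty $x\in W$ is strongly indecomposable if there do not exist two disjoint nonempty elements of $W$ properly contained in $x$. Two strongly indecomposable elements are equivalent if they are not disjoint (this is an equivalence relation on strongly indecomposable elements). *)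

theory Defs
  imports Complex_Main
begin

definition pratt_comonoid :: "'a set \<Rightarrow> 'a set set \<Rightarrow> bool" where
  "pratt_comonoid A W \<longleftrightarrow>
     W \<subseteq> Pow A \<and> {} \<in> W \<and> A \<in> W \<and>
     (\<forall>C. C \<subseteq> A \<times> A \<longrightarrow>
        (\<forall>a\<in>A. {b. (a, b) \<in> C} \<in> W \<and> {b. (b, a) \<in> C} \<in> W) \<longrightarrow>
        {b. (b, b) \<in> C} \<in> W)"

definition pratt_T1 :: "'a set \<Rightarrow> 'a set set \<Rightarrow> bool" where
  "pratt_T1 A W \<longleftrightarrow> (\<forall>a\<in>A. \<forall>b\<in>A. a \<noteq> b \<longrightarrow> (\<exists>w\<in>W. a \<in> w \<and> b \<notin> w))"

definition strongly_indecomposable :: "'a set set \<Rightarrow> 'a set \<Rightarrow> bool" where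
  "strongly_indecomposable W x \<longleftrightarrow> x \<in> W \<and> x \<noteq> {} \<and>
     \<not> (\<exists>y\<in>W. \<exists>z\<in>W. y \<noteq> {} \<and> z \<noteq> {} \<and> y \<inter> z = {} \<and> y \<subset> x \<and> z \<subset> x)"

text \<open>Equivalence classes of strongly indecomposable elements under "not disjoint".\<close>
definition si_class :: "'a set set \<Rightarrow> 'a set set \<Rightarrow> bool" where
  "si_class W E \<longleftrightarrow> (\<exists>x. strongly_indecomposable W x \<and>
     E = {y. strongly_indecomposable W y \<and> x \<inter> y \<noteq> {}})"

definition dominates :: "'a set set \<Rightarrow> 'a \<Rightarrow> 'a set set \<Rightarrow> bool" where
  "dominates W a E \<longleftrightarrow> (\<forall>w\<in>W. a \<in> w \<longrightarrow> (\<exists>e\<in>E. e \<subseteq> w))"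

end

theory Submission
  imports Defs "HOL-Library.Countable"
begin

lemma pc_sub: "pratt_comonoid A W \<Longrightarrow> w \<in> W \<Longrightarrow> w \<subseteq> A"
  unfolding pratt_comonoid_def by blast

lemma pc_empty: "pratt_comonoid A W \<Longrightarrow> {} \<in> W"
  unfolding pratt_comonoid_def by blast

lemma pc_diag: "pratt_comonoid A W \<Longrightarrow> C \<subseteq> A \<times> A \<Longrightarrow>
   (\<And>a. a\<in>A \<Longrightarrow> {b. (a, b) \<in> C} \<in> W \<and> {b. (b, a) \<in> C} \<in> W) \<Longrightarrow> {b. (b, b) \<in> C} \<in> W"
  unfolding pratt_comonoid_def by blast

lemma pc_int:
  assumes P: "pratt_comonoid A W" and u: "u \<in> W" and v: "v \<in> W"
  shows "u \<inter> v \<in> W"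
proof -
  have uA: "u \<subseteq> A" and vA: "v \<subseteq> A" using pc_sub[OF P] u v by auto
  have e: "{} \<in> W" using pc_empty[OF P] .
  have "{b. (b, b) \<in> u \<times> v} \<in> W"
  proof (rule pc_diag[OF P])
    show "u \<times> v \<subseteq> A \<times> A" using uA vA by (rule Sigma_mono)
    fix a assume "a \<in> A"
    have r: "{b. (a, b) \<in> u \<times> v} = (if a \<in> u then v else {})" by simp
    have c: "{b. (b, a) \<in> u \<times> v} = (if a \<in> v then u else {})" by simp
    have "(if a \<in> u then v else {}) \<in> W" using v e by simp
    moreover have "(if a \<in> v then u else {}) \<in> W" using u e by simp
    ultimately show "{b. (a, b) \<in> u \<times> v} \<in> W \<and> {b. (b, a) \<in> u \<times> v} \<in> W"
      unfolding r c by blast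
  qed
  moreover have "{b. (b, b) \<in> u \<times> v} = u \<inter> v" by auto
  ultimately show ?thesis by simp
qed

lemma pc_disj_union:
  fixes f :: "nat \<Rightarrow> 'a set"
  assumes P: "pratt_comonoid A W" and f: "\<And>n. f n \<in> W"
    and d: "\<And>m n. m \<noteq> n \<Longrightarrow> f m \<inter> f n = {}"
  shows "(\<Union>n\<in>S. f n) \<in> W"
proof -
  define C where "C = (\<Union>n\<in>S. f n \<times> f n)"
  have memC: "(x, y) \<in> C \<longleftrightarrow> (\<exists>n\<in>S. x \<in> f n \<and> y \<in> f n)" for x y
    unfolding C_def by blast
  have fA: "\<And>n. f n \<subseteq> A" using pc_sub[OF P] f by blast
  have "{b. (b, b) \<in> C} \<in> W"
  proof (rule pc_diag[OF P])
    show "C \<subseteq> A \<times> A"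
    proof
      fix p assume "p \<in> C"
      then obtain x y where p: "p = (x, y)" "(x, y) \<in> C" by (cases p) blast
      then obtain n where "x \<in> f n" "y \<in> f n" using memC by blast
      then show "p \<in> A \<times> A" using p fA by blast
    qed
    fix a assume "a \<in> A"
    show "{b. (a, b) \<in> C} \<in> W \<and> {b. (b, a) \<in> C} \<in> W"
    proof (cases "\<exists>n\<in>S. a \<in> f n")
      case True
      then obtain n where n: "n \<in> S" "a \<in> f n" by blast
      have u: "m = n" if "a \<in> f m" for m
      proof (rule ccontr)
        assume "m \<noteq> n"
        then have "f m \<inter> f n = {}" by (rule d)
        then show False using that n(2) by blast
      qed
      have "{b. (a, b) \<in> C} = f n"
      proof (rule set_eqI)
        fix b show "b \<in> {b. (a, b) \<in> C} \<longleftrightarrow> b \<in> f n"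
          using memC[of a b] u n by blast
      qed
      moreover have "{b. (b, a) \<in> C} = f n"
      proof (rule set_eqI)
        fix b show "b \<in> {b. (b, a) \<in> C} \<longleftrightarrow> b \<in> f n"
          using memC[of b a] u n by blast
      qed
      ultimately show ?thesis using f by simp
    next
      case False
      then have "{b. (a, b) \<in> C} = {}" "{b. (b, a) \<in> C} = {}" using memC by blast+
      then show ?thesis using pc_empty[OF P] by simp
    qed
  qed
  moreover have "{b. (b, b) \<in> C} = (\<Union>n\<in>S. f n)" using memC by blast
  ultimately show ?thesis by simp
qed

lemma real_le_natset: "(card_of (UNIV :: real set), card_of (UNIV :: nat set set)) \<in> ordLeq"
proof -
  define h where "h r = to_nat ` {q::rat. of_rat q < r}" for r :: real
  have "inj h"
  proof (rule injI)
    fix r s assume eq: "h r = h s"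
    show "r = s"
    proof (rule ccontr)
      assume "r \<noteq> s"
      then have "r < s \<or> s < r" by auto
      then show False
      proof
        assume "r < s"
        then obtain q where q: "r < of_rat q" "of_rat q < s" using of_rat_dense by blast
        then have "to_nat q \<in> h s" unfolding h_def by auto
        then have "to_nat q \<in> h r" using eq by simp
        then obtain q' where "of_rat q' < r" "to_nat q = to_nat q'" unfolding h_def by auto
        then show False using q by (metis inj_to_nat injD less_asym)
      next
        assume "s < r"
        then obtain q where q: "s < of_rat q" "of_rat q < r" using of_rat_dense by blast
        then have "to_nat q \<in> h r" unfolding h_def by auto
        then have "to_nat q \<in> h s" using eq by simp
        then obtain q' where "of_rat q' < s" "to_nat q = to_nat q'" unfolding h_def by auto
        then show False using q by (metis inj_to_nat injD less_asym)
      qed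
    qed
  qed
  then show ?thesis using card_of_ordLeq[of "UNIV::real set" "UNIV :: nat set set"] by blast
qed

lemma no_disj_seq:
  fixes f :: "nat \<Rightarrow> 'a set"
  assumes P: "pratt_comonoid A W"
    and C: "(card_of W, card_of (UNIV :: real set)) \<in> ordLess"
    and f: "\<And>n. f n \<in> W" and ne: "\<And>n. f n \<noteq> {}"
    and d: "\<And>m n. m \<noteq> n \<Longrightarrow> f m \<inter> f n = {}"
  shows False
proof -
  define g where "g S = (\<Union>n\<in>S. f n)" for S :: "nat set"
  have "inj g"
  proof (rule injI)
    fix S T assume eq: "g S = g T"
    show "S = T"
    proof (rule ccontr)
      assume "S \<noteq> T"
      then obtain n where n: "(n \<in> S \<and> n \<notin> T) \<or> (n \<in> T \<and> n \<notin> S)" by blast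
      obtain c where c: "c \<in> f n" using ne by blast
      have u: "m = n" if "c \<in> f m" for m
      proof (rule ccontr)
        assume "m \<noteq> n"
        then have "f m \<inter> f n = {}" by (rule d)
        then show False using that c by blast
      qed
      have gm: "c \<in> g X \<longleftrightarrow> n \<in> X" for X
      proof
        assume "c \<in> g X"
        then obtain m where "m \<in> X" "c \<in> f m" unfolding g_def by blast
        then show "n \<in> X" using u by blast
      next
        assume "n \<in> X" then show "c \<in> g X" unfolding g_def using c by blast
      qed
      show False using eq n gm[of S] gm[of T] by blast
    qed
  qed
  moreover have "g ` UNIV \<subseteq> W"
  proof
    fix y assume "y \<in> g ` UNIV"
    then obtain S where "y = g S" by blast
    then show "y \<in> W" unfolding g_def using pc_disj_union[OF P f d, where S=S] by simp
  qed
  ultimately have "(card_of (UNIV :: nat set set), card_of W) \<in> ordLeq"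
    using card_of_ordLeq[of "UNIV :: nat set set" W] by blast
  then have "(card_of (UNIV :: real set), card_of W) \<in> ordLeq" using real_le_natset ordLeq_transitive by blast
  then show False using C not_ordLess_ordLeq by blast
qed

lemma generic_seq:
  assumes P: "pratt_comonoid A W"
    and C: "(card_of W, card_of (UNIV :: real set)) \<in> ordLess"
    and Q: "\<And>z. Q z \<Longrightarrow> z \<in> W \<and> z \<noteq> {}"
    and step: "\<And>v. R v \<Longrightarrow> \<exists>v' z. R v' \<and> v' \<subseteq> v \<and> z \<subseteq> v \<and> Q z \<and>
                  (\<forall>z'. Q z' \<and> z' \<subseteq> v' \<longrightarrow> z \<inter> z' = {})"
    and vst: "R vst"
  shows False
proof -
  have "\<forall>v. \<exists>p. R v \<longrightarrow> (R (fst p) \<and> fst p \<subseteq> v \<and> snd p \<subseteq> v \<and> Q (snd p) \<and>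
                  (\<forall>z'. Q z' \<and> z' \<subseteq> fst p \<longrightarrow> snd p \<inter> z' = {}))"
    using step by fastforce
  then obtain nx where nx: "\<And>v. R v \<Longrightarrow> R (fst (nx v)) \<and> fst (nx v) \<subseteq> v \<and> snd (nx v) \<subseteq> v \<and> Q (snd (nx v)) \<and>
                  (\<forall>z'. Q z' \<and> z' \<subseteq> fst (nx v) \<longrightarrow> snd (nx v) \<inter> z' = {})"
    by metis
  define v where "v n = ((\<lambda>x. fst (nx x)) ^^ n) vst" for n
  define z where "z n = snd (nx (v n))" for n
  have vS: "v (Suc n) = fst (nx (v n))" for n unfolding v_def by simp
  have Rv: "R (v n)" for n by (induction n) (use vst nx vS v_def in auto)
  have dec: "m \<ge> k \<Longrightarrow> v m \<subseteq> v k" for m k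
  proof (induction m rule: dec_induct)
    case base then show ?case by simp
  next
    case (step m) then show ?case using nx[OF Rv[of m]] vS[of m] by auto
  qed
  have zq: "Q (z n)" for n using nx[OF Rv[of n]] z_def by simp
  have zd: "n < m \<Longrightarrow> z n \<inter> z m = {}" for n m
  proof -
    assume "n < m"
    then have "z m \<subseteq> v (Suc n)" using dec[of "Suc n" m] nx[OF Rv[of m]] z_def by auto
    then show ?thesis using nx[OF Rv[of n]] zq[of m] z_def vS by auto
  qed
  show False
  proof (rule no_disj_seq[OF P C, of z])
    show "z n \<in> W" for n using Q zq by blast
    show "z n \<noteq> {}" for n using Q zq by blast
    show "m \<noteq> n \<Longrightarrow> z m \<inter> z n = {}" for m n
      using zd[of m n] zd[of n m] by (cases "m < n") auto
  qed
qed

lemma si_exists: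
  assumes P: "pratt_comonoid A W"
    and C: "(card_of W, card_of (UNIV :: real set)) \<in> ordLess"
    and w: "w \<in> W" "w \<noteq> {}"
  shows "\<exists>e. strongly_indecomposable W e \<and> e \<subseteq> w"
proof (rule ccontr)
  assume no: "\<not> ?thesis"
  show False
  proof (rule generic_seq[OF P C, where Q = "\<lambda>z. z \<in> W \<and> z \<noteq> {}"
        and R = "\<lambda>v. v \<in> W \<and> v \<noteq> {} \<and> v \<subseteq> w" and vst = w])
    fix v assume R: "v \<in> W \<and> v \<noteq> {} \<and> v \<subseteq> w"
    have "\<not> strongly_indecomposable W v"
    proof
      assume "strongly_indecomposable W v"
      then show False using no R by blast
    qed
    then obtain y z where yz: "y \<in> W" "z \<in> W" "y \<noteq> {}" "z \<noteq> {}" "y \<inter> z = {}" "y \<subset> v" "z \<subset> v"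
      using R unfolding strongly_indecomposable_def by auto
    have yw: "y \<subseteq> w" using yz(6) R by blast
    have dz: "\<forall>z'. (z' \<in> W \<and> z' \<noteq> {}) \<and> z' \<subseteq> y \<longrightarrow> z \<inter> z' = {}"
      using yz(5) by blast
    have "(y \<in> W \<and> y \<noteq> {} \<and> y \<subseteq> w) \<and> y \<subseteq> v \<and> z \<subseteq> v \<and> (z \<in> W \<and> z \<noteq> {}) \<and>
                  (\<forall>z'. (z' \<in> W \<and> z' \<noteq> {}) \<and> z' \<subseteq> y \<longrightarrow> z \<inter> z' = {})"
      using yz yw dz by (simp add: psubset_imp_subset)
    then show "\<exists>v' z. (v' \<in> W \<and> v' \<noteq> {} \<and> v' \<subseteq> w) \<and> v' \<subseteq> v \<and> z \<subseteq> v \<and> (z \<in> W \<and> z \<noteq> {}) \<and>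
                  (\<forall>z'. (z' \<in> W \<and> z' \<noteq> {}) \<and> z' \<subseteq> v' \<longrightarrow> z \<inter> z' = {})"
      by (rule exI[of _ y, OF exI[of _ z]])
  next
    fix z assume "z \<in> W \<and> z \<noteq> {}" then show "z \<in> W \<and> z \<noteq> {}" .
  next
    show "w \<in> W \<and> w \<noteq> {} \<and> w \<subseteq> w" using w by simp
  qed
qed

lemma si_trans:
  assumes P: "pratt_comonoid A W"
    and x: "strongly_indecomposable W x" and y: "strongly_indecomposable W y"
    and z: "strongly_indecomposable W z"
    and xy: "x \<inter> y \<noteq> {}" and yz: "y \<inter> z \<noteq> {}"
  shows "x \<inter> z \<noteq> {}"
proof
  assume xz: "x \<inter> z = {}"
  have W: "x \<in> W" "y \<in> W" "z \<in> W" using x y z unfolding strongly_indecomposable_def by auto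
  have i1: "x \<inter> y \<in> W" using pc_int[OF P W(1) W(2)] .
  have i2: "z \<inter> y \<in> W" using pc_int[OF P W(3) W(2)] .
  have p1: "x \<inter> y \<subset> y"
  proof -
    have "y \<noteq> x \<inter> y" using yz xz by blast
    then show ?thesis by blast
  qed
  have p2: "z \<inter> y \<subset> y"
  proof -
    have "y \<noteq> z \<inter> y" using xy xz by blast
    then show ?thesis by blast
  qed
  have n1: "x \<inter> y \<noteq> {}" using xy .
  have n2: "z \<inter> y \<noteq> {}" using yz by blast
  have dd: "(x \<inter> y) \<inter> (z \<inter> y) = {}" using xz by blast
  have ns: "\<not> (\<exists>a\<in>W. \<exists>b\<in>W. a \<noteq> {} \<and> b \<noteq> {} \<and> a \<inter> b = {} \<and> a \<subset> y \<and> b \<subset> y)"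
    using y unfolding strongly_indecomposable_def by simp
  have "\<exists>a\<in>W. \<exists>b\<in>W. a \<noteq> {} \<and> b \<noteq> {} \<and> a \<inter> b = {} \<and> a \<subset> y \<and> b \<subset> y"
    by (intro bexI[OF _ i1] bexI[OF _ i2] conjI n1 n2 dd p1 p2)
  then show False using ns by contradiction
qed

definition cls where "cls W x = {y. strongly_indecomposable W y \<and> x \<inter> y \<noteq> {}}"

lemma cls_eq:
  assumes P: "pratt_comonoid A W"
    and x: "strongly_indecomposable W x" and y: "strongly_indecomposable W y"
    and xy: "x \<inter> y \<noteq> {}"
  shows "cls W x = cls W y"
proof -
  have yx: "y \<inter> x \<noteq> {}" using xy by blast
  show ?thesis unfolding cls_def
    using si_trans[OF P _ x y, OF _ _ xy] si_trans[OF P _ y x, OF _ _ yx]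
    by (auto simp: Int_commute)
qed

lemma si_class_cls: "si_class W E \<longleftrightarrow> (\<exists>x. strongly_indecomposable W x \<and> E = cls W x)"
  unfolding si_class_def cls_def by simp

lemma x_in_cls: "strongly_indecomposable W x \<Longrightarrow> x \<in> cls W x"
  unfolding cls_def strongly_indecomposable_def by auto

lemma dominates_exists:
  assumes P: "pratt_comonoid A W"
    and C: "(card_of W, card_of (UNIV :: real set)) \<in> ordLess"
    and a: "a \<in> A"
  shows "\<exists>E. si_class W E \<and> dominates W a E"
proof (rule ccontr)
  assume no: "\<not> ?thesis"
  have AW: "A \<in> W" using P unfolding pratt_comonoid_def by blast
  show False
  proof (rule generic_seq[OF P C, where Q = "strongly_indecomposable W"
        and R = "\<lambda>v. v \<in> W \<and> a \<in> v" and vst = A])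
    fix z assume "strongly_indecomposable W z"
    then show "z \<in> W \<and> z \<noteq> {}" unfolding strongly_indecomposable_def by auto
  next
    fix v assume R: "v \<in> W \<and> a \<in> v"
    then obtain e where e: "strongly_indecomposable W e" "e \<subseteq> v"
      using si_exists[OF P C] by blast
    have "\<not> dominates W a (cls W e)" using no e si_class_cls by blast
    then obtain w where w: "w \<in> W" "a \<in> w" "\<forall>y\<in>cls W e. \<not> y \<subseteq> w"
      unfolding dominates_def by blast
    show "\<exists>v' z. (v' \<in> W \<and> a \<in> v') \<and> v' \<subseteq> v \<and> z \<subseteq> v \<and> strongly_indecomposable W z \<and>
                  (\<forall>z'. strongly_indecomposable W z' \<and> z' \<subseteq> v' \<longrightarrow> z \<inter> z' = {})"
    proof (rule exI[of _ "v \<inter> w", OF exI[of _ e]], intro conjI allI impI)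
      show "v \<inter> w \<in> W" using pc_int[OF P, of v w] R w by blast
      show "a \<in> v \<inter> w" using R w by blast
      show "v \<inter> w \<subseteq> v" by blast
      show "e \<subseteq> v" using e by blast
      show "strongly_indecomposable W e" using e by blast
      fix z' assume z': "strongly_indecomposable W z' \<and> z' \<subseteq> v \<inter> w"
      show "e \<inter> z' = {}"
      proof (rule ccontr)
        assume "e \<inter> z' \<noteq> {}"
        then have "z' \<in> cls W e" using z' unfolding cls_def by blast
        then show False using w(3) z' by blast
      qed
    qed
  qed (use AW a in auto)
qed

lemma T1D: "pratt_T1 A W \<Longrightarrow> a \<in> A \<Longrightarrow> b \<in> A \<Longrightarrow> a \<noteq> b \<Longrightarrow> \<exists>w\<in>W. a \<in> w \<and> b \<notin> w"
  unfolding pratt_T1_def by simp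

lemma domD: "dominates W a E \<Longrightarrow> w \<in> W \<Longrightarrow> a \<in> w \<Longrightarrow> \<exists>e\<in>E. e \<subseteq> w"
  unfolding dominates_def by simp

lemma si_W: "strongly_indecomposable W x \<Longrightarrow> x \<in> W"
  unfolding strongly_indecomposable_def by simp

lemma si_ne: "strongly_indecomposable W x \<Longrightarrow> x \<noteq> {}"
  unfolding strongly_indecomposable_def by simp

lemma part2_sub:
  assumes P: "pratt_comonoid A W" and T: "pratt_T1 A W" and a: "a \<in> A"
    and x: "strongly_indecomposable W x" and d: "dominates W a (cls W x)"
  shows "\<Inter>(cls W x) \<subseteq> {a}"
proof
  fix b assume b: "b \<in> \<Inter>(cls W x)"
  have "x \<in> cls W x" using x_in_cls[OF x] .
  then have bx: "b \<in> x" using b by (rule InterD[rotated])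
  have "x \<subseteq> A" using pc_sub[OF P si_W[OF x]] .
  then have bA: "b \<in> A" using bx by blast
  show "b \<in> {a}"
  proof (rule ccontr)
    assume "b \<notin> {a}"
    then have "a \<noteq> b" by simp
    then obtain w where w: "w \<in> W" "a \<in> w" "b \<notin> w" using T1D[OF T a bA] by blast
    obtain e where e: "e \<in> cls W x" "e \<subseteq> w" using domD[OF d w(1) w(2)] by blast
    have "b \<in> e" using b e(1) by (rule InterD)
    then show False using e(2) w(3) by blast
  qed
qed

lemma part2_eq:
  assumes P: "pratt_comonoid A W"
    and x: "strongly_indecomposable W x" and I: "\<Inter>(cls W x) = {a}"
  shows "cls W x = {w. strongly_indecomposable W w \<and> a \<in> w}"
proof (rule set_eqI)
  have aI: "a \<in> \<Inter>(cls W x)" using I by simp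
  have ax: "a \<in> x" using aI x_in_cls[OF x] by (rule InterD)
  fix w
  show "w \<in> cls W x \<longleftrightarrow> w \<in> {w. strongly_indecomposable W w \<and> a \<in> w}"
  proof
    assume "w \<in> cls W x"
    moreover from this have "a \<in> w" using aI by (rule InterD[rotated])
    ultimately show "w \<in> {w. strongly_indecomposable W w \<and> a \<in> w}" unfolding cls_def by simp
  next
    assume "w \<in> {w. strongly_indecomposable W w \<and> a \<in> w}"
    then have "strongly_indecomposable W w" "a \<in> x \<inter> w" using ax by auto
    then show "w \<in> cls W x" unfolding cls_def by blast
  qed
qed

lemma part2_unique:
  assumes P: "pratt_comonoid A W"
    and x: "strongly_indecomposable W x" and I: "\<Inter>(cls W x) = {a}"
    and x': "strongly_indecomposable W x'" and d: "dominates W a (cls W x')"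
  shows "cls W x' = cls W x"
proof -
  have aI: "a \<in> \<Inter>(cls W x)" using I by simp
  have ax: "a \<in> x" using aI x_in_cls[OF x] by (rule InterD)
  have xW: "x \<in> W" using si_W[OF x] .
  obtain e where e: "e \<in> cls W x'" "e \<subseteq> x" using domD[OF d xW ax] by blast
  have eS: "strongly_indecomposable W e" and ex': "x' \<inter> e \<noteq> {}" using e(1) unfolding cls_def by simp_all
  have "e \<noteq> {}" using si_ne[OF eS] .
  then have ex: "e \<inter> x \<noteq> {}" using e by blast
  show ?thesis using cls_eq[OF P x' eS ex'] cls_eq[OF P eS x ex] by simp
qed

lemma part2_dom_unique:
  assumes T: "pratt_T1 A W" and a: "a \<in> A" and b: "b \<in> A"
    and x: "strongly_indecomposable W x" and I: "\<Inter>(cls W x) = {a}"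
    and d: "dominates W b (cls W x)"
  shows "b = a"
proof (rule ccontr)
  assume "b \<noteq> a"
  then obtain w where w: "w \<in> W" "b \<in> w" "a \<notin> w" using T1D[OF T b a] by blast
  obtain e where e: "e \<in> cls W x" "e \<subseteq> w" using domD[OF d w(1) w(2)] by blast
  have aI: "a \<in> \<Inter>(cls W x)" using I by simp
  have "a \<in> e" using aI e(1) by (rule InterD)
  then show False using e(2) w(3) by blast
qed

lemma part3:
  assumes P: "pratt_comonoid A W"
    and C: "(card_of W, card_of (UNIV :: real set)) \<in> ordLess"
    and T: "pratt_T1 A W" and inf: "infinite A"
  shows "\<exists>E. si_class W E \<and> \<Inter>E = {}"
proof (rule ccontr)
  assume no: "\<not> ?thesis"
  have ex: "\<exists>x. strongly_indecomposable W x \<and> dominates W a (cls W x)" if aA: "a \<in> A" for a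
  proof -
    obtain E where E: "si_class W E" "dominates W a E" using dominates_exists[OF P C aA] by blast
    then obtain x where "strongly_indecomposable W x" "E = cls W x" unfolding si_class_cls by blast
    then show ?thesis using E(2) by blast
  qed
  define X where "X a = (SOME x. strongly_indecomposable W x \<and> dominates W a (cls W x))" for a
  have X: "strongly_indecomposable W (X a) \<and> dominates W a (cls W (X a))" if "a \<in> A" for a
    unfolding X_def using someI_ex[OF ex[OF that]] .
  have I: "\<Inter>(cls W (X a)) = {a}" if "a \<in> A" for a
  proof -
    have Xa: "strongly_indecomposable W (X a)" "dominates W a (cls W (X a))" using X[OF that] by simp_all
    have "si_class W (cls W (X a))" unfolding si_class_cls using Xa(1) by blast
    then have "\<Inter>(cls W (X a)) \<noteq> {}" using no by auto
    moreover have "\<Inter>(cls W (X a)) \<subseteq> {a}" using part2_sub[OF P T that Xa(1) Xa(2)] .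
    ultimately show ?thesis by blast
  qed
  obtain h :: "nat \<Rightarrow> 'a" where h: "inj h" "range h \<subseteq> A"
    using infinite_countable_subset[OF inf] by blast
  have hA: "h n \<in> A" for n using h(2) by blast
  show False
  proof (rule no_disj_seq[OF P C, of "\<lambda>n. X (h n)"])
    fix n
    show "X (h n) \<in> W" using si_W X[OF hA[of n]] by blast
    show "X (h n) \<noteq> {}" using si_ne X[OF hA[of n]] by blast
  next
    fix m n :: nat assume mn: "m \<noteq> n"
    show "X (h m) \<inter> X (h n) = {}"
    proof (rule ccontr)
      assume ne: "X (h m) \<inter> X (h n) \<noteq> {}"
      have s1: "strongly_indecomposable W (X (h m))" using X[OF hA[of m]] by simp
      have s2: "strongly_indecomposable W (X (h n))" using X[OF hA[of n]] by simp
      have "cls W (X (h m)) = cls W (X (h n))" using cls_eq[OF P s1 s2 ne] .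
      then have "\<Inter>(cls W (X (h m))) = \<Inter>(cls W (X (h n)))" by (rule arg_cong)
      then have "{h m} = {h n}" unfolding I[OF hA[of m]] I[OF hA[of n]] .
      then have "h m = h n" by simp
      then show False using h(1) mn by (simp add: inj_eq)
    qed
  qed
qed

theorem lemma8p4:
  fixes A :: "'a set" and W :: "'a set set"
  assumes "pratt_comonoid A W"
    and "(card_of W, card_of (UNIV :: real set)) \<in> ordLess"
  shows "(\<forall>a\<in>A. \<exists>E. si_class W E \<and> dominates W a E)
    \<and> (pratt_T1 A W \<longrightarrow>
         (\<forall>a\<in>A. \<forall>E. si_class W E \<and> dominates W a E \<longrightarrow>
            (\<Inter>E = {} \<or> \<Inter>E = {a}) \<and>
            (\<Inter>E = {a} \<longrightarrow>
               E = {w. strongly_indecomposable W w \<and> a \<in> w} \<and>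
               (\<forall>E'. si_class W E' \<and> dominates W a E' \<longrightarrow> E' = E) \<and>
               (\<forall>b\<in>A. dominates W b E \<longrightarrow> b = a))))
    \<and> (pratt_T1 A W \<and> infinite A \<longrightarrow> (\<exists>E. si_class W E \<and> \<Inter>E = {}))"
proof (intro conjI impI ballI allI)
  note P = assms(1) and C = assms(2)
  show "\<exists>E. si_class W E \<and> dominates W a E" if "a \<in> A" for a
    using dominates_exists[OF P C that] .
  show "\<exists>E. si_class W E \<and> \<Inter>E = {}" if TI: "pratt_T1 A W \<and> infinite A"
  proof -
    have "pratt_T1 A W" "infinite A" using TI by simp_all
    then show ?thesis using part3[OF P C] by simp
  qed
  fix a E assume T: "pratt_T1 A W" and a: "a \<in> A" and EE: "si_class W E \<and> dominates W a E"
  have "\<exists>x. strongly_indecomposable W x \<and> E = cls W x" using conjunct1[OF EE] unfolding si_class_cls .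
  then obtain x where x: "strongly_indecomposable W x" "E = cls W x" by (elim exE conjE)
  have d: "dominates W a (cls W x)" using EE x(2) by simp
  have sub: "\<Inter>E \<subseteq> {a}" using part2_sub[OF P T a x(1) d] x(2) by simp
  show "\<Inter>E = {} \<or> \<Inter>E = {a}" using sub by (simp add: subset_singleton_iff)
  {
    assume I: "\<Inter>E = {a}"
    then have I': "\<Inter>(cls W x) = {a}" using x(2) by simp
    show "E = {w. strongly_indecomposable W w \<and> a \<in> w}" using part2_eq[OF P x(1) I'] x(2) by simp
    show "E' = E" if EE': "si_class W E' \<and> dominates W a E'" for E'
    proof -
      have "\<exists>x'. strongly_indecomposable W x' \<and> E' = cls W x'" using conjunct1[OF EE'] unfolding si_class_cls .
      then obtain x' where x': "strongly_indecomposable W x'" "E' = cls W x'" by (elim exE conjE)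
      have d': "dominates W a (cls W x')" using EE' x'(2) by simp
      show ?thesis using part2_unique[OF P x(1) I' x'(1) d'] x(2) x'(2) by simp
    qed
    show "b = a" if b: "b \<in> A" and db: "dominates W b E" for b
    proof -
      have "dominates W b (cls W x)" using db x(2) by simp
      then show ?thesis using part2_dom_unique[OF T a b x(1) I'] by simp
    qed
  }
qed

end
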